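(* Let $Y^{(1)},Y^{(0)}$ be nonnegative random variables (potential outcomes) and $Z$ a random covariate vector. Let $$D(z)=\frac{\mathrm{E}(Y^{(1)}\mid Z=z)}{\mathrm{E}(Y^{(0)}\mid Z=z)}\quad\text{and}\quad AD(c)=\frac{\mathrm{E}(Y^{(1)}\mid D(Z)\ge c)}{\mathrm{E}(Y^{(0)}\mid D(Z)\ge c)}.$$ If all involved expectations are finite and $0<D(Z)<\infty$ for almost every $Z$, then $AD(c)$ is monotone increasing in $c$, and $AD(c)\ge c$ for any $c$. *)

theory Defs
  imports "HOL-Probability.Probability"
begin

definition cond_exp_event :: "'a measure \<Rightarrow> ('a \<Rightarrow> real) \<Rightarrow> 'a set \<Rightarrow> real" where
  "cond_exp_event M X A = (\<integral>x\<in>A. X x \<partial>M) / measure M A"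

text \<open>D(z) = E(Y1 | Z = z) / E(Y0 | Z = z), given versions m1, m0 of the regression functions.\<close>
definition ratio_D :: "('b \<Rightarrow> real) \<Rightarrow> ('b \<Rightarrow> real) \<Rightarrow> 'b \<Rightarrow> real" where
  "ratio_D m1 m0 z = m1 z / m0 z"

definition AD :: "'a measure \<Rightarrow> ('a \<Rightarrow> real) \<Rightarrow> ('a \<Rightarrow> real) \<Rightarrow> ('b \<Rightarrow> real) \<Rightarrow> ('a \<Rightarrow> 'b) \<Rightarrow> real \<Rightarrow> real" where
  "AD M Y1 Y0 D Z c =
     cond_exp_event M Y1 {x \<in> space M. c \<le> D (Z x)} / cond_exp_event M Y0 {x \<in> space M. c \<le> D (Z x)}"

end

theory Submission
  imports Defs
begin

theorem theorem2:
  fixes M :: "'a measure" and N :: "'b measure"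
    and Y1 Y0 :: "'a \<Rightarrow> real" and Z :: "'a \<Rightarrow> 'b" and m1 m0 :: "'b \<Rightarrow> real"
  assumes "prob_space M"
    and "Y1 \<in> borel_measurable M" and "Y0 \<in> borel_measurable M"
    and "Z \<in> M \<rightarrow>\<^sub>M N"
    and "\<forall>x\<in>space M. 0 \<le> Y1 x" and "\<forall>x\<in>space M. 0 \<le> Y0 x"
    and "integrable M Y1" and "integrable M Y0"
    and "m1 \<in> borel_measurable N" and "m0 \<in> borel_measurable N"
    and "AE x in M. m1 (Z x) = real_cond_exp M (vimage_algebra (space M) Z N) Y1 x"
    and "AE x in M. m0 (Z x) = real_cond_exp M (vimage_algebra (space M) Z N) Y0 x"
    and "AE x in M. 0 < ratio_D m1 m0 (Z x)"
  shows "(\<forall>c c'. c \<le> c' \<and> 0 < measure M {x \<in> space M. c' \<le> ratio_D m1 m0 (Z x)}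
            \<longrightarrow> AD M Y1 Y0 (ratio_D m1 m0) Z c \<le> AD M Y1 Y0 (ratio_D m1 m0) Z c')
       \<and> (\<forall>c. 0 < measure M {x \<in> space M. c \<le> ratio_D m1 m0 (Z x)}
            \<longrightarrow> c \<le> AD M Y1 Y0 (ratio_D m1 m0) Z c)"
proof -
  interpret prob_space M by fact
  define F where "F = vimage_algebra (space M) Z N"
  have Zm[measurable]: "Z \<in> M \<rightarrow>\<^sub>M N" by fact
  have [measurable]: "m1 \<in> borel_measurable N" "m0 \<in> borel_measurable N" by fact+
  have [measurable]: "Y1 \<in> borel_measurable M" "Y0 \<in> borel_measurable M" by fact+
  have ZF: "Z \<in> F \<rightarrow>\<^sub>M N" unfolding F_def
    by (rule measurable_vimage_algebra1) (use measurable_space[OF Zm] in auto)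
  have subF: "subalgebra M F" unfolding subalgebra_def F_def
    using sets_image_in_sets[OF refl Zm] by simp
  interpret finite_measure_subalgebra M F
    by unfold_locales (rule subF)
  define d where "d x = ratio_D m1 m0 (Z x)" for x
  define g0 where "g0 x = m0 (Z x)" for x
  define g1 where "g1 x = m1 (Z x)" for x
  have dF: "d \<in> borel_measurable F" unfolding d_def ratio_D_def
    using ZF by measurable
  have [measurable]: "d \<in> borel_measurable M" "g0 \<in> borel_measurable M" "g1 \<in> borel_measurable M"
    unfolding d_def g0_def g1_def ratio_D_def by measurable
  define A where "A c = {x \<in> space M. c \<le> d x}" for c
  have AF: "A c \<in> sets F" for c
  proof -
    have "{x \<in> space F. c \<le> d x} \<in> sets F" using dF by measurable
    moreover have "space F = space M" unfolding F_def by simp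
    ultimately show ?thesis unfolding A_def by simp
  qed
  have AM[measurable]: "A c \<in> sets M" for c unfolding A_def by measurable
  have e1: "AE x in M. g1 x = real_cond_exp M F Y1 x" using assms(11) unfolding g1_def F_def .
  have e0: "AE x in M. g0 x = real_cond_exp M F Y0 x" using assms(12) unfolding g0_def F_def .
  have ig1: "integrable M g1"
    using integrable_cong_AE[OF _ _ e1] real_cond_exp_int(1)[OF assms(7)] by simp
  have ig0: "integrable M g0"
    using integrable_cong_AE[OF _ _ e0] real_cond_exp_int(1)[OF assms(8)] by simp
  have pos0: "AE x in M. 0 \<le> g0 x"
    using e0 real_cond_exp_pos[of Y0] assms(6) by auto
  have key: "AE x in M. 0 < g0 x \<and> g1 x = d x * g0 x"
    using pos0 assms(13) unfolding d_def g0_def g1_def ratio_D_def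
    by eventually_elim (auto simp: field_simps)
  have I1: "(\<integral>x\<in>A c. Y1 x \<partial>M) = (\<integral>x\<in>A c. g1 x \<partial>M)" for c
  proof -
    have "(\<integral>x\<in>A c. Y1 x \<partial>M) = (\<integral>x\<in>A c. real_cond_exp M F Y1 x \<partial>M)"
      by (rule real_cond_exp_intA[OF assms(7) AF])
    also have "\<dots> = (\<integral>x\<in>A c. g1 x \<partial>M)"
      unfolding set_lebesgue_integral_def
      by (rule integral_cong_AE) (use e1 in auto)
    finally show ?thesis .
  qed
  have I0: "(\<integral>x\<in>A c. Y0 x \<partial>M) = (\<integral>x\<in>A c. g0 x \<partial>M)" for c
  proof -
    have "(\<integral>x\<in>A c. Y0 x \<partial>M) = (\<integral>x\<in>A c. real_cond_exp M F Y0 x \<partial>M)"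
      by (rule real_cond_exp_intA[OF assms(8) AF])
    also have "\<dots> = (\<integral>x\<in>A c. g0 x \<partial>M)"
      unfolding set_lebesgue_integral_def
      by (rule integral_cong_AE) (use e0 in auto)
    finally show ?thesis .
  qed
  define J1 where "J1 B = (LINT x|M. indicator B x * g1 x)" for B
  define J0 where "J0 B = (LINT x|M. indicator B x * g0 x)" for B
  have ADeq: "AD M Y1 Y0 (ratio_D m1 m0) Z c = J1 (A c) / J0 (A c)"
    if "0 < measure M (A c)" for c
    using that I1[of c] I0[of c]
    unfolding AD_def cond_exp_event_def J1_def J0_def set_lebesgue_integral_def A_def d_def
    by simp
  have J0pos: "0 < J0 B" if "B \<in> sets M" "0 < measure M B" for B
  proof -
    have int: "integrable M (\<lambda>x. indicator B x * g0 x)"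
      using integrable_mult_indicator[OF that(1) ig0] by simp
    have nn: "AE x in M. 0 \<le> indicator B x * g0 x" using pos0 by eventually_elim auto
    have "J0 B \<ge> 0" unfolding J0_def by (rule integral_nonneg_AE[OF nn])
    moreover have "J0 B \<noteq> 0"
    proof
      assume "J0 B = 0"
      then have "AE x in M. indicator B x * g0 x = 0"
        using integral_nonneg_eq_0_iff_AE[OF int nn] unfolding J0_def by simp
      then have "AE x in M. x \<notin> B" using key by eventually_elim (auto simp: indicator_def)
      then have "emeasure M B = 0" using AE_iff_measurable[of B M "\<lambda>x. x \<notin> B"] that(1)
          sets.sets_into_space[OF that(1)] by auto
      then have "measure M B = 0" by (simp add: measure_def)
      then show False using that(2) by simp
    qed
    ultimately show ?thesis by simp
  qed
  have lower: "c * J0 B \<le> J1 B" if "B \<in> sets M" "B \<subseteq> A c" for B c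
  proof -
    have "c * J0 B = (LINT x|M. indicator B x * (c * g0 x))"
      unfolding J0_def by (simp add: mult.left_commute)
    also have "\<dots> \<le> J1 B" unfolding J1_def
    proof (rule integral_mono_AE)
      show "integrable M (\<lambda>x. indicator B x * (c * g0 x))"
        using integrable_mult_indicator[OF that(1) integrable_mult_right[OF ig0, of c]] by simp
      show "integrable M (\<lambda>x. indicator B x * g1 x)"
        using integrable_mult_indicator[OF that(1) ig1] by simp
      show "AE x in M. indicator B x * (c * g0 x) \<le> indicator B x * g1 x"
        using key AE_space
      proof eventually_elim
        case (elim x)
        then show ?case using that(2) unfolding A_def
          by (auto simp: indicator_def intro!: mult_right_mono)
      qed
    qed
    finally show ?thesis .
  qed
  have upper: "J1 B \<le> c * J0 B" if "B \<in> sets M" "\<forall>x\<in>B. d x < c" for B c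
  proof -
    have "c * J0 B = (LINT x|M. indicator B x * (c * g0 x))"
      unfolding J0_def by (simp add: mult.left_commute)
    moreover have "J1 B \<le> (LINT x|M. indicator B x * (c * g0 x))" unfolding J1_def
    proof (rule integral_mono_AE)
      show "integrable M (\<lambda>x. indicator B x * (c * g0 x))"
        using integrable_mult_indicator[OF that(1) integrable_mult_right[OF ig0, of c]] by simp
      show "integrable M (\<lambda>x. indicator B x * g1 x)"
        using integrable_mult_indicator[OF that(1) ig1] by simp
      show "AE x in M. indicator B x * g1 x \<le> indicator B x * (c * g0 x)"
        using key AE_space
      proof eventually_elim
        case (elim x)
        then show ?case using that(2)
          by (auto simp: indicator_def intro!: mult_right_mono less_imp_le)
      qed
    qed
    ultimately show ?thesis by simp
  qed
  have part2: "c \<le> AD M Y1 Y0 (ratio_D m1 m0) Z c" if "0 < measure M (A c)" for c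
  proof -
    have "0 < J0 (A c)" using J0pos[OF AM that] .
    moreover have "c * J0 (A c) \<le> J1 (A c)" using lower[OF AM subset_refl] .
    ultimately show ?thesis using ADeq[OF that] by (simp add: pos_le_divide_eq)
  qed
  have Asub: "A c' \<subseteq> A c" if "c \<le> c'" for c c' using that unfolding A_def by auto
  have split: "(LINT x|M. indicator (A c) x * g x) =
      (LINT x|M. indicator (A c - A c') x * g x) + (LINT x|M. indicator (A c') x * g x)"
    if "c \<le> c'" "integrable M g" for c c' and g :: "'a \<Rightarrow> real"
  proof -
    have "(LINT x|M. indicator (A c) x * g x) =
      (LINT x|M. indicator (A c - A c') x * g x + indicator (A c') x * g x)"
      using Asub[OF that(1)] by (intro arg_cong[where f="integral\<^sup>L M"]) (auto simp: fun_eq_iff indicator_def)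
    also have "\<dots> = (LINT x|M. indicator (A c - A c') x * g x) + (LINT x|M. indicator (A c') x * g x)"
      by (rule Bochner_Integration.integral_add)
        (use integrable_mult_indicator[OF _ that(2)] in auto)
    finally show ?thesis .
  qed
  have part1: "AD M Y1 Y0 (ratio_D m1 m0) Z c \<le> AD M Y1 Y0 (ratio_D m1 m0) Z c'"
    if cc: "c \<le> c'" and mc': "0 < measure M (A c')" for c c'
  proof -
    have mc: "0 < measure M (A c)"
      using mc' finite_measure_mono[OF Asub[OF cc] AM] by simp
    define B where "B = A c - A c'"
    have BM: "B \<in> sets M" unfolding B_def by simp
    define p where "p = J0 B"
    define q where "q = J0 (A c')"
    define a where "a = J1 B"
    define b where "b = J1 (A c')"
    have J0s: "J0 (A c) = p + q" unfolding p_def q_def J0_def B_def using split[OF cc ig0] .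
    have J1s: "J1 (A c) = a + b" unfolding a_def b_def J1_def B_def using split[OF cc ig1] .
    have q: "0 < q" unfolding q_def by (rule J0pos[OF AM mc'])
    have p: "0 \<le> p" unfolding p_def J0_def
      by (rule integral_nonneg_AE) (use pos0 in \<open>eventually_elim, auto\<close>)
    have ap: "a \<le> c' * p" unfolding a_def p_def
      by (rule upper[OF BM]) (auto simp: B_def A_def)
    have bq: "c' * q \<le> b" unfolding b_def q_def by (rule lower[OF AM subset_refl])
    have "a * q \<le> c' * p * q" using ap q by (simp add: mult_right_mono)
    also have "\<dots> = (c' * q) * p" by simp
    also have "\<dots> \<le> b * p" using bq p by (simp add: mult_right_mono)
    finally have "a * q \<le> b * p" .
    then have "(a + b) * q \<le> b * (p + q)" by (simp add: algebra_simps)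
    then have "(a + b) / (p + q) \<le> b / q" using p q
      by (simp add: divide_simps)
    then show ?thesis using ADeq[OF mc] ADeq[OF mc'] J0s J1s b_def q_def by simp
  qed
  show ?thesis using part1 part2 unfolding A_def d_def by blast
qed

end
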